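(* Let $(\Gamma,M)$ be an E-GCM graph with Coxeter group $W$, and let $J\subseteq I_n$ be such that the parabolic subgroup $W_J$ is finite. Let $s_{i_p}\cdots s_{i_2}s_{i_1}$ be any reduced expression for an element of $W^J$, and let $\lambda\in C_J$. Then for each $1\le q\le p$, $(\gamma_{i_1},\dots,\gamma_{i_q})$ is a legal sequence of node firings in a numbers game played from the initial position $\lambda$ (i.e. for each $q$, the population at $\gamma_{i_q}$ is positive after firing $\gamma_{i_1},\dots,\gamma_{i_{q-1}}$ in order).
   Context: E-GCM $M=(M_{ij})_{i,j\in I_n}$: real, $M_{ii}=2$, $M_{ij}\le0$ ($i\ne j$), $M_{ij}\ne0\iff M_{ji}\ne0$, nonzero $M_{ij}M_{ji}$ either $\ge4$ or $=4\cos^2(\pi/m)$ with $m\ge3$ integer; E-GCM graph with nodes $\gamma_i$, adjacent iff $M_{ij}\ne0$. Positions $\lambda=(\lambda_i)\in\mathbb{R}^n$; firing $\gamma_i$ is allowed iff $\lambda_i>0$ and replaces each $\lambda_j$ by $\lambda_j-M_{ij}\lambda_i$. $W$: Coxeter group with generators $s_i$, $s_i^2=e$, $(s_is_j)^{m_{ij}}=e$, $m_{ij}=k$ if $M_{ij}M_{ji}=4\cos^2(\pi/k)$ ($k\ge2$), $m_{ij}=\infty$ if $M_{ij}M_{ji}\ge4$; $\ell$ = length. For $J\subseteq I_n$, $W_J$ is the subgroup generated by $\{s_j\}_{j\in J}$ and $W^J=\{w\in W:\ell(ws_j)>\ell(w)\ \forall j\in J\}$. $C_J$ is the set of positions $\lambda$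 with $\lambda_j=0$ for $j\in J$ and $\lambda_i>0$ for $i\notin J$. *)

theory Defs
  imports Complex_Main
begin

text \<open>Index set I_n is rendered as {..<n} (nodes 0,...,n-1). A matrix is a function
  M :: nat => nat => real; only entries with indices < n matter.\<close>

definition is_egcm :: "nat \<Rightarrow> (nat \<Rightarrow> nat \<Rightarrow> real) \<Rightarrow> bool" where
  "is_egcm n M \<longleftrightarrow>
     (\<forall>i<n. M i i = 2) \<and>
     (\<forall>i<n. \<forall>j<n. i \<noteq> j \<longrightarrow> M i j \<le> 0) \<and>
     (\<forall>i<n. \<forall>j<n. M i j \<noteq> 0 \<longleftrightarrow> M j i \<noteq> 0) \<and>
     (\<forall>i<n. \<forall>j<n. i \<noteq> j \<longrightarrow> M i j * M j i \<noteq> 0 \<longrightarrow>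
        (M i j * M j i \<ge> 4 \<or> (\<exists>m::nat. m \<ge> 3 \<and> M i j * M j i = 4 * (cos (pi / real m))\<^sup>2)))"

text \<open>Relators of the Coxeter presentation, as words (lists of generator indices):
  s_i s_i, and (s_i s_j)^k whenever i \<noteq> j and M_ij M_ji = 4 cos^2(pi/k), k \<ge> 2
  (i.e. m_ij = k). No relator when M_ij M_ji \<ge> 4 (m_ij = infinity).\<close>

inductive cox_relator :: "nat \<Rightarrow> (nat \<Rightarrow> nat \<Rightarrow> real) \<Rightarrow> nat list \<Rightarrow> bool"
  for n M where
  sq: "i < n \<Longrightarrow> cox_relator n M [i, i]"
| braid: "i < n \<Longrightarrow> j < n \<Longrightarrow> i \<noteq> j \<Longrightarrow> k \<ge> 2 \<Longrightarrow>
          M i j * M j i = 4 * (cos (pi / real k))\<^sup>2 \<Longrightarrow>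
          cox_relator n M (concat (replicate k [i, j]))"

text \<open>Two words represent the same element of the Coxeter group W iff they are related
  by the congruence generated by the relators.\<close>

inductive cox_eq :: "nat \<Rightarrow> (nat \<Rightarrow> nat \<Rightarrow> real) \<Rightarrow> nat list \<Rightarrow> nat list \<Rightarrow> bool"
  for n M where
  refl: "cox_eq n M u u"
| sym: "cox_eq n M u v \<Longrightarrow> cox_eq n M v u"
| trans: "cox_eq n M u v \<Longrightarrow> cox_eq n M v w \<Longrightarrow> cox_eq n M u w"
| del: "cox_relator n M r \<Longrightarrow> cox_eq n M (a @ r @ b) (a @ b)"

definition cox_rel :: "nat \<Rightarrow> (nat \<Rightarrow> nat \<Rightarrow> real) \<Rightarrow> (nat list \<times> nat list) set" where
  "cox_rel n M = {(u, v). cox_eq n M u v}"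

definition parabolic :: "nat \<Rightarrow> (nat \<Rightarrow> nat \<Rightarrow> real) \<Rightarrow> nat set \<Rightarrow> nat list set set" where
  "parabolic n M J = {u. set u \<subseteq> J} // cox_rel n M"

definition cox_len :: "nat \<Rightarrow> (nat \<Rightarrow> nat \<Rightarrow> real) \<Rightarrow> nat list \<Rightarrow> nat" where
  "cox_len n M u = (LEAST k. \<exists>v. length v = k \<and> cox_eq n M u v)"

definition reduced :: "nat \<Rightarrow> (nat \<Rightarrow> nat \<Rightarrow> real) \<Rightarrow> nat list \<Rightarrow> bool" where
  "reduced n M w \<longleftrightarrow> set w \<subseteq> {..<n} \<and> length w = cox_len n M w"

definition in_min_coset :: "nat \<Rightarrow> (nat \<Rightarrow> nat \<Rightarrow> real) \<Rightarrow> nat set \<Rightarrow> nat list \<Rightarrow> bool" where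
  "in_min_coset n M J w \<longleftrightarrow> (\<forall>j\<in>J. cox_len n M (w @ [j]) > cox_len n M w)"

definition fire :: "(nat \<Rightarrow> nat \<Rightarrow> real) \<Rightarrow> (nat \<Rightarrow> real) \<Rightarrow> nat \<Rightarrow> (nat \<Rightarrow> real)" where
  "fire M lam i = (\<lambda>j. lam j - M i j * lam i)"

fun legal :: "(nat \<Rightarrow> nat \<Rightarrow> real) \<Rightarrow> (nat \<Rightarrow> real) \<Rightarrow> nat list \<Rightarrow> bool" where
  "legal M lam [] = True"
| "legal M lam (i # is) = (lam i > 0 \<and> legal M (fire M lam i) is)"

definition cone_C :: "nat \<Rightarrow> nat set \<Rightarrow> (nat \<Rightarrow> real) set" where
  "cone_C n J = {lam. (\<forall>j\<in>J. lam j = 0) \<and> (\<forall>i\<in>{..<n} - J. lam i > 0)}"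

end

theory Submission
  imports Defs
begin

lemma cox_eq_cong: "cox_eq n M u v \<Longrightarrow> cox_eq n M (p @ u @ s) (p @ v @ s)"
proof (induction rule: cox_eq.induct)
  case (refl u) show ?case by (rule cox_eq.refl)
next
  case (sym u v) thus ?case by (metis cox_eq.sym)
next
  case (trans u v w) thus ?case by (metis cox_eq.trans)
next
  case (del r a b)
  have "cox_eq n M ((p@a) @ r @ (b@s)) ((p@a) @ (b@s))" by (rule cox_eq.del[OF del])
  thus ?case by simp
qed

lemma cox_eq_app: "cox_eq n M u u' \<Longrightarrow> cox_eq n M v v' \<Longrightarrow> cox_eq n M (u @ v) (u' @ v')"
  by (metis append.right_neutral append_Nil cox_eq.trans cox_eq_cong)

lemma cox_eq_sq: "i < n \<Longrightarrow> cox_eq n M (a @ [i,i] @ b) (a @ b)"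
  by (rule cox_eq.del) (rule cox_relator.sq)

lemma concat_rep_set: "set (concat (replicate k [i,j])) \<subseteq> {i,j}"
  by (induction k) auto

lemma concat_rep_len: "length (concat (replicate k [i,j::nat])) = 2 * k"
  by (induction k) auto

lemma relator_set: "cox_relator n M r \<Longrightarrow> set r \<subseteq> {..<n}"
  by (induction rule: cox_relator.induct) (use concat_rep_set in fastforce)+

lemma relator_even: "cox_relator n M r \<Longrightarrow> even (length r)"
  by (induction rule: cox_relator.induct) (auto simp: concat_rep_len)

lemma concat_rep_snoc: "concat (replicate k x) @ x = x @ concat (replicate k x)"
  by (induction k) auto

lemma rev_concat_rep: "rev (concat (replicate k [i,j])) = concat (replicate k [j,i])"
proof (induction k)
  case 0 then show ?case by simp
next
  case (Suc k)
  have "rev (concat (replicate (Suc k) [i,j])) = concat (replicate k [j,i]) @ [j,i]"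
    using Suc by simp
  also have "\<dots> = concat (replicate (Suc k) [j,i])" by (simp add: concat_rep_snoc)
  finally show ?case .
qed

lemma relator_rev: "cox_relator n M r \<Longrightarrow> cox_relator n M (rev r)"
proof (induction rule: cox_relator.induct)
  case (sq i) then show ?case by (simp add: cox_relator.sq)
next
  case (braid i j k)
  then show ?case unfolding rev_concat_rep
    by (intro cox_relator.braid) (auto simp: mult.commute)
qed

lemma cox_eq_set: "cox_eq n M u v \<Longrightarrow> (set u \<subseteq> {..<n}) = (set v \<subseteq> {..<n})"
  by (induction rule: cox_eq.induct) (use relator_set in auto)

lemma cox_eq_even: "cox_eq n M u v \<Longrightarrow> even (length u) = even (length v)"
  by (induction rule: cox_eq.induct) (use relator_even in auto)

lemma cox_eq_rev: "cox_eq n M u v \<Longrightarrow> cox_eq n M (rev u) (rev v)"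
proof (induction rule: cox_eq.induct)
  case (refl u) show ?case by (rule cox_eq.refl)
next
  case (sym u v) thus ?case by (metis cox_eq.sym)
next
  case (trans u v w) thus ?case by (metis cox_eq.trans)
next
  case (del r a b)
  show ?case using cox_eq.del[OF relator_rev[OF del], of "rev b" "rev a"] by simp
qed

abbreviation len where "len n M u \<equiv> cox_len n M u"

lemma len_min: "cox_eq n M u v \<Longrightarrow> cox_len n M u \<le> length v"
  unfolding cox_len_def by (rule Least_le) auto

lemma len_le: "cox_len n M u \<le> length u"
  by (rule len_min) (rule cox_eq.refl)

lemma len_ex: "\<exists>v. cox_eq n M u v \<and> length v = cox_len n M u"
proof -
  have "\<exists>k. \<exists>v. length v = k \<and> cox_eq n M u v" using cox_eq.refl by blast
  then have "\<exists>v. length v = cox_len n M u \<and> cox_eq n M u v"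
    unfolding cox_len_def by (rule LeastI_ex)
  then show ?thesis by blast
qed

lemma len_cong: "cox_eq n M u v \<Longrightarrow> cox_len n M u = cox_len n M v"
proof -
  assume h: "cox_eq n M u v"
  have "(\<exists>x. length x = k \<and> cox_eq n M u x) = (\<exists>x. length x = k \<and> cox_eq n M v x)" for k
    using h by (metis cox_eq.sym cox_eq.trans)
  then show ?thesis unfolding cox_len_def by simp
qed

lemma len_rev: "cox_len n M (rev u) = cox_len n M u"
proof -
  have "cox_len n M (rev u) \<le> cox_len n M u" for u
  proof -
    obtain v where "cox_eq n M u v" "length v = cox_len n M u" using len_ex by blast
    then show ?thesis using len_min[OF cox_eq_rev] by fastforce
  qed
  from this[of u] this[of "rev u"] show ?thesis by simp
qed

lemma len_app: "cox_len n M (u @ v) \<le> cox_len n M u + cox_len n M v"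
proof -
  obtain u' where "cox_eq n M u u'" "length u' = cox_len n M u" using len_ex by blast
  moreover obtain v' where "cox_eq n M v v'" "length v' = cox_len n M v" using len_ex by blast
  ultimately show ?thesis using len_min[OF cox_eq_app] by fastforce
qed

lemma len_infix: "cox_len n M (a @ u @ b) \<le> length a + cox_len n M u + length b"
proof -
  have "cox_len n M (a @ u @ b) \<le> cox_len n M a + cox_len n M (u @ b)" by (rule len_app)
  also have "\<dots> \<le> cox_len n M a + (cox_len n M u + cox_len n M b)" using len_app by simp
  finally show ?thesis using len_le[of n M a] len_le[of n M b] by simp
qed

lemma len_snoc_le: "cox_len n M (u @ [i]) \<le> cox_len n M u + 1"
  using len_app[of n M u "[i]"] len_le[of n M "[i]"] by simp

lemma len_snoc_ge: "i < n \<Longrightarrow> cox_len n M u \<le> cox_len n M (u @ [i]) + 1"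
proof -
  assume "i < n"
  then have "cox_eq n M ((u @ [i]) @ [i]) u" using cox_eq_sq[of i n M u "[]"] by simp
  then have "cox_len n M u = cox_len n M ((u @ [i]) @ [i])" by (metis len_cong cox_eq.sym)
  then show ?thesis using len_snoc_le[of n M "u @ [i]" i] by simp
qed

lemma len_parity: "cox_len n M (u @ [i]) \<noteq> cox_len n M u"
proof
  assume h: "cox_len n M (u @ [i]) = cox_len n M u"
  obtain u' where 1: "cox_eq n M u u'" "length u' = cox_len n M u" using len_ex by blast
  obtain u'' where 2: "cox_eq n M (u@[i]) u''" "length u'' = cox_len n M (u@[i])" using len_ex by blast
  show False using cox_eq_even[OF 1(1)] cox_eq_even[OF 2(1)] 1(2) 2(2) h by simp
qed

definition sr :: "nat \<Rightarrow> (nat \<Rightarrow> nat \<Rightarrow> real) \<Rightarrow> nat \<Rightarrow> (nat \<Rightarrow> real) \<Rightarrow> (nat \<Rightarrow> real)" where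
  "sr n M a b = b(a := b a - (\<Sum>l<n. M a l * b l))"

fun act :: "nat \<Rightarrow> (nat \<Rightarrow> nat \<Rightarrow> real) \<Rightarrow> nat list \<Rightarrow> (nat \<Rightarrow> real) \<Rightarrow> (nat \<Rightarrow> real)" where
  "act n M [] b = b"
| "act n M (a # w) b = sr n M a (act n M w b)"

definition al :: "nat \<Rightarrow> nat \<Rightarrow> real" where "al k = (\<lambda>l. if l = k then 1 else 0)"

lemma sum_upd: "(i::nat) < n \<Longrightarrow> (\<Sum>l<n. (f::nat\<Rightarrow>real) l * (b(i:=x)) l) = (\<Sum>l<n. f l * b l) + f i * (x - b i)"
proof -
  assume i: "i < n"
  have "(\<Sum>l<n. f l * (b(i:=x)) l) = (\<Sum>l<n. f l * b l + (if l = i then f i * (x - b i) else 0))"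
    by (rule sum.cong) (auto simp: right_diff_distrib)
  also have "\<dots> = (\<Sum>l<n. f l * b l) + f i * (x - b i)"
    using i by (simp add: sum.distrib algebra_simps)
  finally show ?thesis .
qed

lemma act_append: "act n M (u @ v) b = act n M u (act n M v b)"
  by (induction u) auto

lemma sr_sr: "a < n \<Longrightarrow> M a a = 2 \<Longrightarrow> sr n M a (sr n M a b) = b"
proof -
  assume a: "a < n" "M a a = 2"
  define S where "S = (\<Sum>l<n. M a l * b l)"
  have "(\<Sum>l<n. M a l * (sr n M a b) l) = S + M a a * (- S)"
    unfolding sr_def S_def by (subst sum_upd[OF a(1)]) simp
  then have "(\<Sum>l<n. M a l * (sr n M a b) l) = - S" using a by simp
  then show ?thesis unfolding sr_def[of n M a "sr n M a b"] by (auto simp: sr_def S_def)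
qed

lemma sr_lin: "sr n M a (\<lambda>k. x * b k + y * c k) = (\<lambda>k. x * sr n M a b k + y * sr n M a c k)"
proof -
  have "(\<Sum>l<n. M a l * (x * b l + y * c l)) = x * (\<Sum>l<n. M a l * b l) + y * (\<Sum>l<n. M a l * c l)"
    by (simp add: sum_distrib_left sum.distrib algebra_simps)
  then show ?thesis unfolding sr_def by (auto simp: algebra_simps)
qed

lemma act_lin: "act n M u (\<lambda>k. x * b k + y * c k) = (\<lambda>k. x * act n M u b k + y * act n M u c k)"
  by (induction u) (auto simp: sr_lin)

lemma act_zero: "act n M u (\<lambda>k. 0) = (\<lambda>k. 0)"
  using act_lin[of n M u 0 "\<lambda>k. 0" 0 "\<lambda>k. 0"] by simp

lemma act_sum: "finite S \<Longrightarrow> act n M u (\<lambda>k. \<Sum>l\<in>S. c l * al l k) = (\<lambda>k. \<Sum>l\<in>S. c l * act n M u (al l) k)"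
proof (induction S rule: finite_induct)
  case empty then show ?case using act_zero by simp
next
  case (insert x F)
  have "act n M u (\<lambda>k. \<Sum>l\<in>insert x F. c l * al l k)
      = act n M u (\<lambda>k. c x * al x k + 1 * (\<Sum>l\<in>F. c l * al l k))"
    using insert by simp
  also have "\<dots> = (\<lambda>k. c x * act n M u (al x) k + 1 * act n M u (\<lambda>k. \<Sum>l\<in>F. c l * al l k) k)"
    by (rule act_lin)
  also have "\<dots> = (\<lambda>k. \<Sum>l\<in>insert x F. c l * act n M u (al l) k)"
    using insert by simp
  finally show ?case .
qed

lemma expand: "(\<forall>l\<ge>n. b l = 0) \<Longrightarrow> b = (\<lambda>k. \<Sum>l<n. b l * al l k)"
proof
  fix k assume h: "\<forall>l\<ge>n. b l = 0"
  show "b k = (\<Sum>l<n. b l * al l k)"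
  proof (cases "k < n")
    case True
    then have "(\<Sum>l<n. b l * al l k) = (\<Sum>l<n. if l = k then b k else 0)"
      by (intro sum.cong) (auto simp: al_def)
    then show ?thesis using True by simp
  next
    case False
    then show ?thesis using h by (auto simp: al_def)
  qed
qed

lemma act_support: "set u \<subseteq> {..<n} \<Longrightarrow> (\<forall>l\<ge>n. b l = 0) \<Longrightarrow> l \<ge> n \<Longrightarrow> act n M u b l = 0"
  by (induction u) (auto simp: sr_def)

lemma act_rev_inv: "set u \<subseteq> {..<n} \<Longrightarrow> \<forall>i<n. M i i = 2 \<Longrightarrow> act n M (rev u) (act n M u b) = b"
proof (induction u arbitrary: b)
  case Nil then show ?case by simp
next
  case (Cons a u)
  have "act n M (rev (a # u)) (act n M (a # u) b) = act n M (rev u) (sr n M a (sr n M a (act n M u b)))"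
    by (simp add: act_append)
  also have "\<dots> = act n M (rev u) (act n M u b)" using Cons.prems by (simp add: sr_sr)
  also have "\<dots> = b" using Cons by simp
  finally show ?case .
qed

lemma fire_pair: "x < n \<Longrightarrow> (\<Sum>l<n. fire M lam x l * b l) = (\<Sum>l<n. lam l * sr n M x b l)"
proof -
  assume x: "x < n"
  have "(\<Sum>l<n. fire M lam x l * b l) = (\<Sum>l<n. lam l * b l) - lam x * (\<Sum>l<n. M x l * b l)"
    by (simp add: fire_def algebra_simps sum_subtractf sum_distrib_left)
  moreover have "(\<Sum>l<n. lam l * sr n M x b l) = (\<Sum>l<n. lam l * b l) + lam x * (- (\<Sum>l<n. M x l * b l))"
    unfolding sr_def using sum_upd[OF x, of lam b] by simp
  ultimately show ?thesis by simp
qed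

lemma pos_pair: "set xs \<subseteq> {..<n} \<Longrightarrow> k < n \<Longrightarrow>
   foldl (fire M) lam xs k = (\<Sum>l<n. lam l * act n M xs (al k) l)"
proof (induction xs arbitrary: lam)
  case Nil
  have "(\<Sum>l<n. lam l * al k l) = (\<Sum>l<n. if l = k then lam k else 0)"
    by (intro sum.cong) (auto simp: al_def)
  then show ?case using Nil by simp
next
  case (Cons x xs)
  then have "foldl (fire M) lam (x # xs) k = (\<Sum>l<n. fire M lam x l * act n M xs (al k) l)" by simp
  also have "\<dots> = (\<Sum>l<n. lam l * act n M (x # xs) (al k) l)" using Cons.prems fire_pair by simp
  finally show ?case .
qed

lemma legal_pos: "(\<forall>t<length xs. foldl (fire M) lam (take t xs) (xs ! t) > 0) \<Longrightarrow> legal M lam xs"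
proof (induction xs arbitrary: lam)
  case Nil then show ?case by simp
next
  case (Cons x xs)
  have "lam x > 0" using Cons.prems[rule_format, of 0] by simp
  moreover have "legal M (fire M lam x) xs"
  proof (rule Cons.IH, intro allI impI)
    fix t assume "t < length xs"
    then show "foldl (fire M) (fire M lam x) (take t xs) (xs ! t) > 0"
      using Cons.prems[rule_format, of "Suc t"] by simp
  qed
  ultimately show ?case by simp
qed

fun cheb :: "real \<Rightarrow> nat \<Rightarrow> real" where
  "cheb t 0 = 0"
| "cheb t (Suc 0) = 1"
| "cheb t (Suc (Suc m)) = t * cheb t (Suc m) - cheb t m"

lemma sin_rec: "sin (real (Suc (Suc m)) * f) = 2 * cos f * sin (real (Suc m) * f) - sin (real m * f)"
proof -
  have a: "real (Suc (Suc m)) * f = real (Suc m) * f + f" by (simp add: algebra_simps)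
  have b: "real m * f = real (Suc m) * f - f" by (simp add: algebra_simps)
  show ?thesis unfolding a b sin_add sin_diff by (simp add: algebra_simps)
qed

lemma cheb_sin: "sin f \<noteq> 0 \<Longrightarrow> cheb (2 * cos f) m = sin (real m * f) / sin f"
proof (induction "2 * cos f" m rule: cheb.induct)
  case 1 then show ?case by simp
next
  case 2 then show ?case by simp
next
  case (3 m)
  then show ?case using sin_rec[of m f] by (simp add: field_simps)
qed

definition Lm :: "real \<Rightarrow> real \<Rightarrow> real \<times> real \<Rightarrow> real \<times> real" where
  "Lm P Q d = ((P*Q-1) * fst d + P * snd d, - Q * fst d - snd d)"

lemma Lm_pow: "(Lm P Q ^^ Suc m) d =
   (cheb (P*Q-2) (Suc m) * fst (Lm P Q d) - cheb (P*Q-2) m * fst d,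
    cheb (P*Q-2) (Suc m) * snd (Lm P Q d) - cheb (P*Q-2) m * snd d)"
proof (induction m)
  case 0 then show ?case by simp
next
  case (Suc m)
  have "(Lm P Q ^^ Suc (Suc m)) d = Lm P Q ((Lm P Q ^^ Suc m) d)" by (simp only: funpow.simps comp_def)
  also have "\<dots> = Lm P Q (cheb (P*Q-2) (Suc m) * fst (Lm P Q d) - cheb (P*Q-2) m * fst d,
    cheb (P*Q-2) (Suc m) * snd (Lm P Q d) - cheb (P*Q-2) m * snd d)" by (simp only: Suc)
  also have "\<dots> = (cheb (P*Q-2) (Suc (Suc m)) * fst (Lm P Q d) - cheb (P*Q-2) (Suc m) * fst d,
    cheb (P*Q-2) (Suc (Suc m)) * snd (Lm P Q d) - cheb (P*Q-2) (Suc m) * snd d)"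
    by (simp add: Lm_def algebra_simps)
  finally show ?case .
qed

lemma funpow_conj:
  assumes FT: "\<And>x. F x = T (G (Ti x))" and TT: "\<And>x. Ti (T x) = x"
  shows "(F ^^ Suc m) x = T ((G ^^ Suc m) (Ti x))"
proof (induction m)
  case 0 then show ?case using FT by simp
next
  case (Suc m)
  have "(F ^^ Suc (Suc m)) x = F ((F ^^ Suc m) x)" by (simp only: funpow.simps comp_def)
  also have "\<dots> = T (G (Ti ((F ^^ Suc m) x)))" by (rule FT)
  also have "\<dots> = T (G (Ti (T ((G ^^ Suc m) (Ti x)))))" using Suc by (simp only:)
  also have "\<dots> = T (G ((G ^^ Suc m) (Ti x)))" using TT by (simp only:)
  finally show ?case by (simp only: funpow.simps comp_def)
qed

definition Fa :: "real \<Rightarrow> real \<Rightarrow> real \<Rightarrow> real \<Rightarrow> real \<times> real \<Rightarrow> real \<times> real" where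
  "Fa P Q p q x = (let b' = - snd x - Q * fst x - q in (- fst x - P * b' - p, b'))"

lemma Fa_id:
  assumes k: "k \<ge> 3" and PQ: "P * Q = 4 * (cos (pi / real k))\<^sup>2"
  shows "(Fa P Q p q ^^ k) x = x"
proof -
  define f where "f = 2 * pi / real k"
  have f0: "0 < f" "f < pi" using k by (auto simp: f_def field_simps)
  have sf: "sin f > 0" using f0 sin_gt_zero by blast
  have t: "P * Q - 2 = 2 * cos f"
    unfolding PQ f_def using cos_double_cos[of "pi / real k"] by (simp add: algebra_simps)
  have c0: "cos (pi / real k) < 1"
  proof -
    have "0 < pi / real k" "pi / real k < pi" using k by (auto simp: field_simps)
    then have "cos (pi / real k) < cos 0" by (intro cos_monotone_0_pi) auto
    then show ?thesis by simp
  qed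
  have c1: "cos (pi / real k) \<ge> 0"
  proof (rule cos_ge_zero)
    show "- (pi / 2) \<le> pi / real k" by (smt (verit) pi_gt_zero divide_nonneg_nonneg of_nat_0_le_iff)
    show "pi / real k \<le> pi / 2" using k by (intro divide_left_mono) auto
  qed
  have "(cos (pi / real k))\<^sup>2 < 1" using c0 c1 by (simp add: power2_eq_square) (smt (verit) mult_less_cancel_right1 mult_nonneg_nonneg)
  then have D: "4 - P * Q \<noteq> 0" using PQ by simp
  obtain m where m: "k = Suc m" using k by (cases k) auto
  have ck: "cheb (P*Q-2) (Suc m) = 0"
    unfolding t using cheb_sin[of f "Suc m"] sf m[symmetric] k by (simp add: f_def)
  have ck1: "cheb (P*Q-2) m = -1"
  proof -
    have "real m * f = 2 * pi - f" using m k by (simp add: f_def field_simps)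
    then show ?thesis unfolding t using cheb_sin[of f m] sf by simp
  qed
  have Lk: "(Lm P Q ^^ Suc m) d = d" for d using Lm_pow[where P=P and Q=Q and m=m and d=d] ck ck1 by simp
  define e where "e = inverse (4 - P*Q)"
  have e1: "e * (4 - P*Q) = 1" unfolding e_def using D by simp
  define a0 where "a0 = (-2*p + P*q) * e"
  define b0 where "b0 = (-2*q + Q*p) * e"
  have "2 * a0 + P * b0 = e * (4 - P*Q) * (- p)" unfolding a0_def b0_def by (simp add: algebra_simps)
  then have fa: "2 * a0 + P * b0 = - p" using e1 by simp
  have "2 * b0 + Q * a0 = e * (4 - P*Q) * (- q)" unfolding a0_def b0_def by (simp add: algebra_simps)
  then have fb: "2 * b0 + Q * a0 = - q" using e1 by simp
  define T where "T = (\<lambda>d::real\<times>real. (fst d + a0, snd d + b0))"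
  define Ti where "Ti = (\<lambda>d::real\<times>real. (fst d - a0, snd d - b0))"
  have FT: "Fa P Q p q x = T (Lm P Q (Ti x))" for x
  proof -
    obtain x1 x2 where x: "x = (x1, x2)" by (cases x)
    have Pfb: "P * (2 * b0 + Q * a0) = P * (- q)" using fb by simp
    have 1: "- x1 - P * (- x2 - Q * x1 - q) - p = (P*Q-1) * (x1 - a0) + P * (x2 - b0) + a0"
      using fa Pfb by (simp add: algebra_simps)
    have 2: "- x2 - Q * x1 - q = - Q * (x1 - a0) - (x2 - b0) + b0" using fb by (simp add: algebra_simps)
    show ?thesis unfolding x Fa_def T_def Ti_def Lm_def Let_def fst_conv snd_conv prod.inject using 1 2 by blast
  qed
  have "(Fa P Q p q ^^ Suc m) x = T ((Lm P Q ^^ Suc m) (Ti x))"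
    by (rule funpow_conj[where F="Fa P Q p q" and T=T and G="Lm P Q" and Ti=Ti, OF FT]) (simp add: T_def Ti_def)
  then show ?thesis using Lk m by (simp add: T_def Ti_def)
qed

locale eg =
  fixes n :: nat and M :: "nat \<Rightarrow> nat \<Rightarrow> real"
  assumes egcm: "is_egcm n M"
begin

lemma diag: "i < n \<Longrightarrow> M i i = 2" using egcm unfolding is_egcm_def by blast
lemma offneg: "i < n \<Longrightarrow> j < n \<Longrightarrow> i \<noteq> j \<Longrightarrow> M i j \<le> 0" using egcm unfolding is_egcm_def by blast
lemma symz: "i < n \<Longrightarrow> j < n \<Longrightarrow> M i j = 0 \<longleftrightarrow> M j i = 0" using egcm unfolding is_egcm_def by blast
lemma prodcase: "i < n \<Longrightarrow> j < n \<Longrightarrow> i \<noteq> j \<Longrightarrow> M i j * M j i \<noteq> 0 \<Longrightarrow>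
   M i j * M j i \<ge> 4 \<or> (\<exists>m::nat. m \<ge> 3 \<and> M i j * M j i = 4 * (cos (pi / real m))\<^sup>2)"
  using egcm unfolding is_egcm_def by blast

definition pr :: "nat \<Rightarrow> nat \<Rightarrow> nat \<Rightarrow> (nat \<Rightarrow> real) \<Rightarrow> real" where
  "pr i j x b = (\<Sum>l\<in>{..<n} - {i,j}. M x l * b l)"

lemma split3: "i < n \<Longrightarrow> j < n \<Longrightarrow> i \<noteq> j \<Longrightarrow>
   (\<Sum>l<n. f l) = f i + f j + (\<Sum>l\<in>{..<n} - {i,j}. f l)"
proof -
  assume h: "i < n" "j < n" "i \<noteq> j"
  have "(\<Sum>l<n. f l) = f i + (\<Sum>l\<in>{..<n} - {i}. f l)" using h by (simp add: sum.remove)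
  also have "(\<Sum>l\<in>{..<n} - {i}. f l) = f j + (\<Sum>l\<in>{..<n} - {i} - {j}. f l)"
    using h by (intro sum.remove) auto
  also have "{..<n} - {i} - {j} = {..<n} - {i,j}" by auto
  finally show ?thesis by (simp add: add.assoc)
qed

lemma step2:
  assumes h: "i < n" "j < n" "i \<noteq> j"
  shows "sr n M i (sr n M j b) = (\<lambda>l. if l = i then fst (Fa (M i j) (M j i) (pr i j i b) (pr i j j b) (b i, b j))
      else if l = j then snd (Fa (M i j) (M j i) (pr i j i b) (pr i j j b) (b i, b j)) else b l)"
proof -
  define c where "c = sr n M j b"
  have cj: "c j = - b j - M j i * b i - pr i j j b"
    unfolding c_def sr_def pr_def using split3[OF h, of "\<lambda>l. M j l * b l"] diag[OF h(2)] h by simp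
  have co: "c l = b l" if "l \<noteq> j" for l unfolding c_def sr_def using that by simp
  have prc: "(\<Sum>l\<in>{..<n} - {i,j}. M i l * c l) = (\<Sum>l\<in>{..<n} - {i,j}. M i l * b l)"
    using co by (intro sum.cong) auto
  have ci: "sr n M i c i = - b i - M i j * c j - pr i j i b"
    unfolding sr_def pr_def using split3[OF h, of "\<lambda>l. M i l * c l"] diag[OF h(1)] h co prc by simp
  show ?thesis
  proof
    fix l
    show "sr n M i (sr n M j b) l = (if l = i then fst (Fa (M i j) (M j i) (pr i j i b) (pr i j j b) (b i, b j))
      else if l = j then snd (Fa (M i j) (M j i) (pr i j i b) (pr i j j b) (b i, b j)) else b l)"
      using ci cj co h unfolding c_def[symmetric] by (auto simp: Fa_def Let_def sr_def)
  qed
qed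

lemma rep_act:
  assumes h: "i < n" "j < n" "i \<noteq> j"
  shows "act n M (concat (replicate m [i,j])) b = (\<lambda>l.
     if l = i then fst ((Fa (M i j) (M j i) (pr i j i b) (pr i j j b) ^^ m) (b i, b j))
     else if l = j then snd ((Fa (M i j) (M j i) (pr i j i b) (pr i j j b) ^^ m) (b i, b j)) else b l)"
proof (induction m)
  case 0 then show ?case by auto
next
  case (Suc m)
  define c where "c = act n M (concat (replicate m [i,j])) b"
  have co: "c l = b l" if "l \<noteq> i" "l \<noteq> j" for l using Suc that unfolding c_def by simp
  have pri: "pr i j x c = pr i j x b" for x unfolding pr_def using co by (intro sum.cong) auto
  have cij: "(c i, c j) = (Fa (M i j) (M j i) (pr i j i b) (pr i j j b) ^^ m) (b i, b j)"
    using Suc h unfolding c_def by simp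
  have "act n M (concat (replicate (Suc m) [i,j])) b = sr n M i (sr n M j c)"
    unfolding c_def by simp
  also have "\<dots> = (\<lambda>l. if l = i then fst (Fa (M i j) (M j i) (pr i j i b) (pr i j j b) (c i, c j))
      else if l = j then snd (Fa (M i j) (M j i) (pr i j i b) (pr i j j b) (c i, c j)) else c l)"
    using step2[OF h, of c] unfolding pri by simp
  finally show ?case using cij co by auto
qed

lemma braid_act:
  assumes h: "i < n" "j < n" "i \<noteq> j" and k: "k \<ge> 2"
    and PQ: "M i j * M j i = 4 * (cos (pi / real k))\<^sup>2"
  shows "act n M (concat (replicate k [i,j])) b = b"
proof -
  have F: "(Fa (M i j) (M j i) p q ^^ k) x = x" for p q x
  proof (cases "k = 2")
    case True
    then have "M i j * M j i = 0" using PQ by simp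
    then have "M i j = 0" "M j i = 0" using symz[OF h(1,2)] by auto
    then show ?thesis using True by (simp add: Fa_def Let_def numeral_2_eq_2)
  next
    case False
    then show ?thesis using Fa_id[OF _ PQ] k by simp
  qed
  show ?thesis unfolding rep_act[OF h] F by auto
qed

lemma relator_act: "cox_relator n M r \<Longrightarrow> act n M r b = b"
proof (induction rule: cox_relator.induct)
  case (sq i) then show ?case by (simp add: sr_sr diag)
next
  case (braid i j k) then show ?case using braid_act by blast
qed

lemma act_cong: "cox_eq n M u v \<Longrightarrow> act n M u = act n M v"
proof (induction rule: cox_eq.induct)
  case (del r a b)
  then show ?case by (auto simp: act_append relator_act)
qed auto

end

definition alt :: "nat \<Rightarrow> nat \<Rightarrow> nat \<Rightarrow> nat list" where
  "alt a b L = map (\<lambda>t. if even t then a else b) [0..<L]"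

lemma alt_len[simp]: "length (alt a b L) = L" by (simp add: alt_def)
lemma alt_nth[simp]: "t < L \<Longrightarrow> alt a b L ! t = (if even t then a else b)" by (simp add: alt_def)
lemma alt_Suc: "alt a b (Suc L) = alt a b L @ [if even L then a else b]" by (simp add: alt_def)
lemma alt_0[simp]: "alt a b 0 = []" by (simp add: alt_def)
lemma alt_Cons: "alt a b (Suc L) = a # alt b a L"
  by (rule nth_equalityI) (auto simp: nth_Cons split: nat.splits)
lemma alt_take: "L \<le> K \<Longrightarrow> take L (alt a b K) = alt a b L"
  by (simp add: alt_def take_map)
lemma alt_set: "set (alt a b L) \<subseteq> {a,b}" by (auto simp: alt_def)

lemma alt_concat: "concat (replicate m [a,b]) = alt a b (2*m)"
proof (induction m)
  case 0 then show ?case by simp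
next
  case (Suc m)
  have "concat (replicate (Suc m) [a,b]) = concat (replicate m [a,b]) @ [a,b]"
    by (simp add: concat_rep_snoc)
  also have "\<dots> = alt a b (Suc (Suc (2*m)))" using Suc by (simp add: alt_Suc)
  finally show ?case by simp
qed

lemma alt_rev_app: "alt a b m @ rev (alt b a m) = alt a b (2*m)"
proof (rule nth_equalityI)
  fix t assume "t < length (alt a b m @ rev (alt b a m))"
  then have t: "t < 2*m" by simp
  show "(alt a b m @ rev (alt b a m)) ! t = alt a b (2*m) ! t"
  proof (cases "t < m")
    case True then show ?thesis using t by (simp add: nth_append)
  next
    case False
    then have "(alt a b m @ rev (alt b a m)) ! t = alt b a m ! (m - Suc (t - m))"
      using t by (simp add: nth_append rev_nth)
    moreover have "even (m - Suc (t - m)) = odd t" using False t by presburger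
    ultimately show ?thesis using t False by simp
  qed
qed simp

context eg begin

lemma rev_cancel: "set u \<subseteq> {..<n} \<Longrightarrow> cox_eq n M (p @ rev u @ u @ s) (p @ s)"
proof (induction u arbitrary: p s)
  case Nil then show ?case by (simp add: cox_eq.refl)
next
  case (Cons x u)
  have "cox_eq n M ((p @ rev u) @ [x,x] @ (u @ s)) ((p @ rev u) @ (u @ s))"
    using Cons.prems by (intro cox_eq_sq) auto
  moreover have "cox_eq n M (p @ rev u @ u @ s) (p @ s)" using Cons by simp
  ultimately show ?case by (auto intro: cox_eq.trans)
qed

lemma braid_alt:
  assumes r: "cox_relator n M (concat (replicate m [a,b]))" and ab: "a < n" "b < n"
  shows "cox_eq n M (alt a b m) (alt b a m)"
proof -
  have s: "set (alt b a m) \<subseteq> {..<n}" using alt_set ab by blast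
  have 1: "cox_eq n M (alt a b m @ rev (alt b a m) @ alt b a m @ []) (alt a b m @ [])"
    by (rule rev_cancel[OF s])
  have 2: "cox_eq n M ([] @ concat (replicate m [a,b]) @ alt b a m) ([] @ alt b a m)"
    by (rule cox_eq.del[OF r])
  have "alt a b m @ rev (alt b a m) @ alt b a m = concat (replicate m [a,b]) @ alt b a m"
    by (simp add: alt_rev_app alt_concat)
  then show ?thesis using 1 2 by (metis append_Nil append_Nil2 cox_eq.sym cox_eq.trans)
qed

lemma alt_bound:
  assumes r: "cox_relator n M (concat (replicate m [a,b]))" and ab: "a < n" "b < n"
    and m: "m \<ge> 1" and red: "cox_len n M (alt a b K) = K"
  shows "K \<le> m"
proof (rule ccontr)
  assume "\<not> K \<le> m"
  then have K: "Suc m \<le> K" by simp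
  have "alt a b K = take (Suc m) (alt a b K) @ drop (Suc m) (alt a b K)" by simp
  then have "K \<le> cox_len n M (alt a b (Suc m)) + (K - Suc m)"
    using len_app[of n M "take (Suc m) (alt a b K)" "drop (Suc m) (alt a b K)"] len_le[of n M "drop (Suc m) (alt a b K)"]
      red alt_take[OF K] by simp
  then have big: "cox_len n M (alt a b (Suc m)) \<ge> Suc m" using K by simp
  define c where "c = (if even m then a else b)"
  obtain m' where m': "m = Suc m'" using m by (cases m) auto
  have e1: "alt a b (Suc m) = alt a b m @ [c]" by (simp add: alt_Suc c_def)
  have e2: "alt b a m = alt b a m' @ [c]" by (simp add: alt_Suc c_def m')
  have "cox_eq n M (alt a b m @ [c]) (alt b a m @ [c])"
    using cox_eq_cong[OF braid_alt[OF r ab], of "[]" "[c]"] by simp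
  moreover have "cox_eq n M (alt b a m' @ [c,c] @ []) (alt b a m' @ [])"
    using ab by (intro cox_eq_sq) (auto simp: c_def)
  ultimately have "cox_eq n M (alt a b (Suc m)) (alt b a m')"
    unfolding e1 using e2 by (auto intro: cox_eq.trans)
  then have "cox_len n M (alt a b (Suc m)) \<le> m'" using len_min by fastforce
  then show False using big m' by simp
qed

lemma noadj:
  assumes red: "cox_len n M z = length z" and s: "set z \<subseteq> {..<n}" and t: "Suc t < length z"
  shows "z ! t \<noteq> z ! Suc t"
proof
  assume eq: "z ! t = z ! Suc t"
  have "z = take t z @ [z ! t, z ! Suc t] @ drop (Suc (Suc t)) z"
    using t by (metis Cons_nth_drop_Suc Suc_lessD append_Cons append_Nil append_take_drop_id)
  then have "z = take t z @ [z ! t, z ! t] @ drop (Suc (Suc t)) z" using eq by simp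
  moreover have "z ! t < n" using s t by (meson Suc_lessD lessThan_iff nth_mem subsetD)
  ultimately have "cox_eq n M z (take t z @ drop (Suc (Suc t)) z)" by (metis cox_eq_sq)
  then have "cox_len n M z \<le> length z - 2" using len_min t by fastforce
  then show False using red t by simp
qed

lemma alt_char:
  assumes ab: "a \<noteq> b" and s: "set z \<subseteq> {a,b}" and z0: "z \<noteq> []" "z ! 0 = a"
    and na: "\<And>t. Suc t < length z \<Longrightarrow> z ! t \<noteq> z ! Suc t"
  shows "z = alt a b (length z)"
proof (rule nth_equalityI)
  fix t assume "t < length z"
  then show "z ! t = alt a b (length z) ! t"
  proof (induction t)
    case 0 then show ?case using z0 by simp
  next
    case (Suc t)
    have "z ! t \<in> {a,b}" "z ! Suc t \<in> {a,b}" using s Suc.prems by (meson Suc_lessD nth_mem subsetD)+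
    then show ?case using Suc na[of t] ab by (auto split: if_splits)
  qed
qed simp

end

fun dseq :: "real \<Rightarrow> real \<Rightarrow> nat \<Rightarrow> real \<times> real" where
  "dseq P Q 0 = (1, 0)"
| "dseq P Q (Suc L) = (if even L then (fst (dseq P Q L), - snd (dseq P Q L) - Q * fst (dseq P Q L))
     else (- fst (dseq P Q L) - P * snd (dseq P Q L), snd (dseq P Q L)))"

lemma dseq_odd: "odd L \<Longrightarrow> dseq P Q (Suc L) = (- fst (dseq P Q L) - P * snd (dseq P Q L), snd (dseq P Q L))"
  by simp
lemma dseq_even: "even L \<Longrightarrow> dseq P Q (Suc L) = (fst (dseq P Q L), - snd (dseq P Q L) - Q * fst (dseq P Q L))"
  by simp

declare dseq.simps(2)[simp del]

lemma dseq_closed: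
  assumes c: "c > 0" "c * c = P * Q"
  shows "dseq P Q (2*k) = (cheb c (2*k+1), (-Q/c) * cheb c (2*k)) \<and>
         dseq P Q (2*k+1) = (cheb c (2*k+1), (-Q/c) * cheb c (2*k+2))"
proof (induction k)
  case 0
  then show ?case using c by (simp add: numeral_2_eq_2 dseq.simps)
next
  case (Suc k)
  have d: "dseq P Q (2*k+1) = (cheb c (2*k+1), (-Q/c) * cheb c (2*k+2))" by (rule conjunct2[OF Suc.IH])
  have pc: "P * ((-Q/c) * x) = - c * x" for x
  proof -
    have "P * ((-Q/c) * x) = - ((P * Q) / c) * x" by (simp add: algebra_simps)
    also have "\<dots> = - c * x" using c by (simp flip: c(2))
    finally show ?thesis .
  qed
  have r1: "cheb c (2*k+3) = c * cheb c (2*k+2) - cheb c (2*k+1)"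
    by (simp add: numeral_2_eq_2 numeral_3_eq_3)
  have r2: "cheb c (2*k+4) = c * cheb c (2*k+3) - cheb c (2*k+2)"
    by (simp add: numeral_2_eq_2 numeral_3_eq_3 eval_nat_numeral)
  have e1: "dseq P Q (2*k+2) = (cheb c (2*k+3), (-Q/c) * cheb c (2*k+2))"
  proof -
    have "dseq P Q (2*k+2) = dseq P Q (Suc (2*k+1))" by simp
    also have "\<dots> = (- fst (dseq P Q (2*k+1)) - P * snd (dseq P Q (2*k+1)), snd (dseq P Q (2*k+1)))"
      by (rule dseq_odd) simp
    also have "\<dots> = (cheb c (2*k+3), (-Q/c) * cheb c (2*k+2))" unfolding d using pc r1 by simp
    finally show ?thesis .
  qed
  have e2: "dseq P Q (2*k+3) = (cheb c (2*k+3), (-Q/c) * cheb c (2*k+4))"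
  proof -
    have "2*k+3 = Suc (2*k+2)" by simp
    then have "dseq P Q (2*k+3) = dseq P Q (Suc (2*k+2))" by (simp only:)
    also have "\<dots> = (fst (dseq P Q (2*k+2)), - snd (dseq P Q (2*k+2)) - Q * fst (dseq P Q (2*k+2)))"
      by (rule dseq_even) simp
    also have "\<dots> = (cheb c (2*k+3), - ((-Q/c) * cheb c (2*k+2)) - Q * cheb c (2*k+3))" unfolding e1 by simp
    also have "- ((-Q/c) * cheb c (2*k+2)) - Q * cheb c (2*k+3) = (-Q/c) * (c * cheb c (2*k+3) - cheb c (2*k+2))"
      using c by (simp add: field_simps)
    finally show ?thesis using r2 by simp
  qed
  have "2 * Suc k = 2*k+2" "2*k+2 + 1 = 2*k+3" "2*k+2 + 2 = 2*k+4" by simp_all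
  then show ?case using e1 e2 by (simp only:)
qed

lemma dseq_nonneg:
  assumes c: "c > 0" "c * c = P * Q" and Q: "Q \<le> 0" and u: "\<And>l. l \<le> Suc L \<Longrightarrow> cheb c l \<ge> 0"
  shows "fst (dseq P Q L) \<ge> 0 \<and> snd (dseq P Q L) \<ge> 0"
proof -
  have qc: "-Q/c \<ge> 0" using c Q by (intro divide_nonneg_pos) auto
  define k where "k = L div 2"
  have "L = 2*k \<or> L = 2*k+1" unfolding k_def by presburger
  then show ?thesis
  proof
    assume L: "L = 2*k"
    have "(-Q/c) * cheb c (2*k) \<ge> 0" by (rule mult_nonneg_nonneg[OF qc u]) (simp add: L)
    then show ?thesis using dseq_closed[OF c, of k] u[of "2*k+1"] L by simp
  next
    assume L: "L = 2*k+1"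
    have "(-Q/c) * cheb c (2*k+2) \<ge> 0" by (rule mult_nonneg_nonneg[OF qc u]) (simp add: L)
    then show ?thesis using dseq_closed[OF c, of k] u[of "2*k+1"] L by simp
  qed
qed

lemma cheb_ge2: "c \<ge> 2 \<Longrightarrow> cheb c l \<ge> 0 \<and> cheb c (Suc l) \<ge> cheb c l"
proof (induction l)
  case 0 then show ?case by simp
next
  case (Suc l)
  have a: "cheb c (Suc l) \<ge> 0" "cheb c (Suc l) \<ge> cheb c l" using Suc by linarith+
  have b: "(c - 2) * cheb c (Suc l) \<ge> 0" using a Suc.prems by simp
  have e: "cheb c (Suc (Suc l)) = (c - 2) * cheb c (Suc l) + 2 * cheb c (Suc l) - cheb c l"
    by (simp add: algebra_simps)
  show ?case using a b e by linarith
qed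

lemma cheb_cos:
  assumes m: "m \<ge> 2" and l: "l \<le> m"
  shows "cheb (2 * cos (pi / real m)) l \<ge> 0"
proof -
  have s: "sin (pi / real m) > 0" using m by (intro sin_gt_zero) (auto simp: field_simps)
  have "sin (real l * (pi / real m)) \<ge> 0"
    using m l by (intro sin_ge_zero) (auto simp: field_simps)
  then show ?thesis using cheb_sin[of "pi / real m" l] s by simp
qed

context eg begin

definition vec2 :: "nat \<Rightarrow> nat \<Rightarrow> real \<Rightarrow> real \<Rightarrow> nat \<Rightarrow> real" where
  "vec2 i j a b = (\<lambda>l. a * al i l + b * al j l)"

lemma sum_vec2:
  assumes h: "i < n" "j < n" "i \<noteq> j"
  shows "(\<Sum>l<n. f l * vec2 i j a b l) = f i * a + f j * b"
proof -
  have "(\<Sum>l\<in>{..<n} - {i,j}. f l * vec2 i j a b l) = 0"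
    by (rule sum.neutral) (auto simp: vec2_def al_def)
  then show ?thesis using split3[OF h, of "\<lambda>l. f l * vec2 i j a b l"] h by (simp add: vec2_def al_def)
qed

lemma sr_vec2:
  assumes h: "i < n" "j < n" "i \<noteq> j"
  shows "sr n M j (vec2 i j a b) = vec2 i j a (- b - M j i * a)"
    "sr n M i (vec2 i j a b) = vec2 i j (- a - M i j * b) b"
proof -
  show "sr n M j (vec2 i j a b) = vec2 i j a (- b - M j i * a)"
    unfolding sr_def sum_vec2[OF h] using h diag[of j] by (auto simp: vec2_def al_def)
  show "sr n M i (vec2 i j a b) = vec2 i j (- a - M i j * b) b"
    unfolding sr_def sum_vec2[OF h] using h diag[of i] by (auto simp: vec2_def al_def)
qed

lemma act_word:
  assumes h: "i < n" "j < n" "i \<noteq> j"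
  shows "act n M (alt (if even L then i else j) (if even L then j else i) L) (al i)
        = vec2 i j (fst (dseq (M i j) (M j i) L)) (snd (dseq (M i j) (M j i) L))"
proof (induction L)
  case 0 then show ?case by (simp add: vec2_def)
next
  case (Suc L)
  have w: "alt (if even (Suc L) then i else j) (if even (Suc L) then j else i) (Suc L)
     = (if even L then j else i) # alt (if even L then i else j) (if even L then j else i) L"
    by (simp add: alt_Cons)
  show ?case unfolding w using Suc sr_vec2[OF h] by (simp add: dseq.simps)
qed

lemma dihedral:
  assumes h: "i < n" "j < n" "i \<noteq> j" and y: "set y \<subseteq> {i,j}"
    and red: "cox_len n M (y @ [i]) = length y + 1"
  shows "\<exists>a b. a \<ge> 0 \<and> b \<ge> 0 \<and> act n M y (al i) = vec2 i j a b"
proof -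
  define z where "z = y @ [i]"
  define L where "L = length y"
  have zs: "set z \<subseteq> {i,j}" using y by (simp add: z_def)
  have zn: "set z \<subseteq> {..<n}" using zs h by auto
  have zr: "cox_len n M z = length z" using red by (simp add: z_def)
  define z0 where "z0 = z ! 0"
  define z1 where "z1 = (if z0 = i then j else i)"
  have z0m: "z0 \<in> {i,j}"
  proof -
    have "z \<noteq> []" by (simp add: z_def)
    then have "z ! 0 \<in> set z" by simp
    then show ?thesis using zs unfolding z0_def by blast
  qed
  have zs': "set z \<subseteq> {z0,z1}" using zs z0m by (auto simp: z1_def)
  have z01: "z0 \<noteq> z1" using h by (auto simp: z1_def)
  have zalt: "z = alt z0 z1 (Suc L)"
    using alt_char[OF z01 zs', of] noadj[OF zr zn] unfolding z0_def
    by (simp add: z_def L_def z1_def z0_def)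
  have "z ! L = i" by (simp add: z_def L_def)
  then have zL: "(if even L then z0 else z1) = i" using zalt by (metis alt_nth lessI)
  have zz: "z0 = (if even L then i else j) \<and> z1 = (if even L then j else i)"
    using zL h z0m by (auto simp: z1_def split: if_splits)
  have yw: "y = alt (if even L then i else j) (if even L then j else i) L"
  proof -
    have "y = take L z" by (simp add: z_def L_def)
    also have "\<dots> = alt z0 z1 L" using zalt alt_take[of L "Suc L"] by simp
    finally show ?thesis using zz by simp
  qed
  have redz: "cox_len n M (alt z0 z1 (Suc L)) = Suc L" using zr zalt by (simp add: L_def z_def)
  have z0n: "z0 < n" "z1 < n" using z0m h by (auto simp: z1_def)
  have rel: "cox_relator n M (concat (replicate k [z0, z1]))"
    if "k \<ge> 2" "M i j * M j i = 4 * (cos (pi / real k))\<^sup>2" for k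
  proof (cases "z0 = i")
    case True then show ?thesis using that h by (intro cox_relator.braid) (auto simp: z1_def)
  next
    case False then have "z0 = j" "z1 = i" using z0m by (auto simp: z1_def)
    then show ?thesis using that h by (intro cox_relator.braid) (auto simp: mult.commute)
  qed
  define P where "P = M i j"
  define Q where "Q = M j i"
  have P0: "P \<le> 0" "Q \<le> 0" using offneg h by (auto simp: P_def Q_def)
  have nonneg: "fst (dseq P Q L) \<ge> 0 \<and> snd (dseq P Q L) \<ge> 0"
  proof (cases "P * Q = 0")
    case True
    have "M i j * M j i = 4 * (cos (pi / real (2::nat)))\<^sup>2" using True by (simp add: P_def Q_def)
    then have r2: "cox_relator n M (concat (replicate 2 [z0, z1]))" using rel[of 2] by simp
    have "Suc L \<le> 2" using alt_bound[OF r2 z0n _ redz] by simp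
    then have "L = 0 \<or> L = 1" by auto
    then show ?thesis using P0 by (auto simp: dseq.simps)
  next
    case False
    have pq: "P * Q > 0" using False P0 by (simp add: zero_less_mult_iff order_le_less)
    define c where "c = sqrt (P * Q)"
    have c: "c > 0" "c * c = P * Q" using pq by (auto simp: c_def)
    have "P * Q \<ge> 4 \<or> (\<exists>m::nat. m \<ge> 3 \<and> P * Q = 4 * (cos (pi / real m))\<^sup>2)"
      using prodcase[OF h] False by (simp add: P_def Q_def)
    then show ?thesis
    proof
      assume "P * Q \<ge> 4"
      then have "c \<ge> 2" unfolding c_def by (metis real_sqrt_four real_sqrt_le_iff)
      then show ?thesis using dseq_nonneg[OF c P0(2)] cheb_ge2 by blast
    next
      assume "\<exists>m::nat. m \<ge> 3 \<and> P * Q = 4 * (cos (pi / real m))\<^sup>2"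
      then obtain m :: nat where m: "m \<ge> 3" "P * Q = 4 * (cos (pi / real m))\<^sup>2" by blast
      have "Suc L \<le> m" using alt_bound[OF rel[of m] z0n _ redz] m by (simp add: P_def Q_def)
      have cs: "cos (pi / real m) \<ge> 0"
      proof (rule cos_ge_zero)
        show "- (pi / 2) \<le> pi / real m" by (smt (verit) pi_gt_zero divide_nonneg_nonneg of_nat_0_le_iff)
        show "pi / real m \<le> pi / 2" using m by (intro divide_left_mono) auto
      qed
      have "c = 2 * cos (pi / real m)" unfolding c_def m(2) using cs
        by (simp add: real_sqrt_mult)
      then show ?thesis using dseq_nonneg[OF c P0(2)] cheb_cos[of m] m \<open>Suc L \<le> m\<close> by force
    qed
  qed
  show ?thesis using act_word[OF h, of L] nonneg yw by (auto simp: P_def Q_def)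
qed

end

context eg begin

lemma posB:
  "cox_len n M (w @ [i]) > cox_len n M w \<Longrightarrow> set w \<subseteq> {..<n} \<Longrightarrow> i < n \<Longrightarrow> act n M w (al i) l \<ge> 0"
proof (induction "cox_len n M w" arbitrary: w i l rule: less_induct)
  case less
  note IH = less.hyps
  show ?case
  proof (cases "cox_len n M w = 0")
    case True
    obtain w' where w': "cox_eq n M w w'" "length w' = cox_len n M w" using len_ex by blast
    then have "w' = []" using True by simp
    then have "act n M w = act n M []" using act_cong[OF w'(1)] by simp
    then show ?thesis by (simp add: al_def)
  next
    case False
    obtain w' where w': "cox_eq n M w w'" "length w' = cox_len n M w" using len_ex by blast
    then obtain w'' j where wj: "w' = w'' @ [j]" using False by (metis length_0_conv rev_exhaust)
    have w'n: "set w' \<subseteq> {..<n}" using cox_eq_set[OF w'(1)] less.prems by simp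
    then have jn: "j < n" and w''n: "set w'' \<subseteq> {..<n}" using wj by auto
    have lw'': "cox_len n M w'' = cox_len n M w - 1"
    proof -
      have "cox_len n M w'' \<le> cox_len n M w - 1" using len_le[of n M w''] w' wj by simp
      moreover have "cox_len n M w \<le> cox_len n M w'' + 1"
        using len_cong[OF w'(1)] len_snoc_le[of n M w'' j] wj by simp
      ultimately show ?thesis by simp
    qed
    have ji: "j \<noteq> i"
    proof
      assume "j = i"
      have "cox_eq n M (w @ [i]) (w' @ [i])" using cox_eq_cong[OF w'(1), of "[]" "[i]"] by simp
      moreover have "cox_eq n M (w'' @ [i,i] @ []) (w'' @ [])" using less.prems by (intro cox_eq_sq) auto
      ultimately have "cox_eq n M (w @ [i]) w''" using wj \<open>j = i\<close> by (auto intro: cox_eq.trans)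
      then have "cox_len n M (w @ [i]) = cox_len n M w''" by (rule len_cong)
      then show False using lw'' less.prems(1) by simp
    qed
    define Pc where "Pc = (\<lambda>v y. set v \<subseteq> {..<n} \<and> set y \<subseteq> {i,j} \<and> cox_eq n M (v @ y) w \<and>
        cox_len n M v + length y = cox_len n M w)"
    have P0: "Pc w'' [j]"
      unfolding Pc_def using w''n lw'' False wj w'(1) by (auto intro: cox_eq.sym)
    define k0 where "k0 = (LEAST k. \<exists>v y. Pc v y \<and> cox_len n M v = k)"
    have "\<exists>v y. Pc v y \<and> cox_len n M v = k0"
      unfolding k0_def by (rule LeastI_ex) (use P0 in blast)
    then obtain v y where vy: "Pc v y" "cox_len n M v = k0" by blast
    have vmin: "cox_len n M v \<le> cox_len n M v'" if "Pc v' y'" for v' y'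
      unfolding vy(2) k0_def by (rule Least_le) (use that in blast)
    have lv: "cox_len n M v < cox_len n M w" using vmin[OF P0] lw'' False by simp
    have vn: "set v \<subseteq> {..<n}" and ys: "set y \<subseteq> {i,j}" and vyw: "cox_eq n M (v @ y) w"
      and vyl: "cox_len n M v + length y = cox_len n M w" using vy(1) unfolding Pc_def by auto
    have desc: "cox_len n M (v @ [x]) > cox_len n M v" if x: "x \<in> {i,j}" for x
    proof (rule ccontr)
      assume "\<not> ?thesis"
      then have lt: "cox_len n M (v @ [x]) < cox_len n M v" using len_parity[of n M v x] by simp
      have xn: "x < n" using x less.prems jn by auto
      obtain v0 where v0: "cox_eq n M (v @ [x]) v0" "length v0 = cox_len n M (v @ [x])" using len_ex by blast
      have lv0: "cox_len n M v0 = cox_len n M v - 1"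
        using len_cong[OF v0(1)] len_snoc_ge[OF xn, of M v] lt by simp
      have v0n: "set v0 \<subseteq> {..<n}" using cox_eq_set[OF v0(1)] vn xn by simp
      have "cox_eq n M (v0 @ [x] @ y) ((v @ [x]) @ [x] @ y)"
        using cox_eq_cong[OF cox_eq.sym[OF v0(1)], of "[]" "[x] @ y"] by simp
      moreover have "cox_eq n M (v @ [x,x] @ y) (v @ y)" using xn by (rule cox_eq_sq)
      ultimately have "cox_eq n M (v0 @ x # y) w" using vyw by (auto intro: cox_eq.trans)
      then have "Pc v0 (x # y)" unfolding Pc_def using v0n ys x lv0 vyl lt by auto
      then have "cox_len n M v \<le> cox_len n M v0" by (rule vmin)
      then show False using lv0 lt by simp
    qed
    have pi: "act n M v (al i) l' \<ge> 0" for l'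
      using IH[OF lv desc[of i] vn less.prems(3)] by simp
    have pj: "act n M v (al j) l' \<ge> 0" for l'
      using IH[OF lv desc[of j] vn jn] by simp
    have red: "cox_len n M (y @ [i]) = length y + 1"
    proof -
      have "cox_len n M (w @ [i]) = cox_len n M w + 1" using less.prems(1) len_snoc_le[of n M w i] by simp
      moreover have "cox_eq n M ((v @ y) @ [i]) (w @ [i])" using cox_eq_cong[OF vyw, of "[]" "[i]"] by simp
      ultimately have "cox_len n M (v @ (y @ [i])) = cox_len n M w + 1" using len_cong by fastforce
      then have "cox_len n M w + 1 \<le> cox_len n M v + cox_len n M (y @ [i])" using len_app by metis
      then have "cox_len n M (y @ [i]) \<ge> length y + 1" using vyl by simp
      moreover have "cox_len n M (y @ [i]) \<le> length y + 1" using len_le[of n M "y @ [i]"] by simp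
      ultimately show ?thesis by simp
    qed
    obtain a b where ab: "a \<ge> 0" "b \<ge> 0" "act n M y (al i) = vec2 i j a b"
      using dihedral[OF less.prems(3) jn ji[symmetric] ys red] by blast
    have "act n M w (al i) = act n M (v @ y) (al i)" using act_cong[OF vyw] by simp
    also have "\<dots> = act n M v (vec2 i j a b)" by (simp add: act_append ab)
    also have "\<dots> = (\<lambda>k. a * act n M v (al i) k + b * act n M v (al j) k)"
      unfolding vec2_def by (rule act_lin)
    finally show ?thesis using pi pj ab by simp
  qed
qed

end

theorem proposition5p2:
  fixes n :: nat and M :: "nat \<Rightarrow> nat \<Rightarrow> real" and J :: "nat set"
    and w :: "nat list" and lam :: "nat \<Rightarrow> real"
  assumes "is_egcm n M"
    and "J \<subseteq> {..<n}"
    and "finite (parabolic n M J)"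
    and "reduced n M w"
    and "in_min_coset n M J w"
    and "lam \<in> cone_C n J"
  shows "\<forall>q. 1 \<le> q \<and> q \<le> length w \<longrightarrow> legal M lam (take q (rev w))"
proof -
  interpret eg n M by unfold_locales (rule assms(1))
  define r where "r = rev w"
  define p where "p = length w"
  have wn: "set w \<subseteq> {..<n}" and wr: "length w = cox_len n M w" using assms(4) unfolding reduced_def by auto
  have lamJ: "\<And>l. l \<in> J \<Longrightarrow> lam l = 0" and lamP: "\<And>l. l < n \<Longrightarrow> l \<notin> J \<Longrightarrow> lam l > 0"
    using assms(6) unfolding cone_C_def by auto
  have lam0: "lam l \<ge> 0" if "l < n" for l
    using lamJ lamP that by (cases "l \<in> J") (auto intro: less_imp_le)
  have key: "foldl (fire M) lam (take t r) (r ! t) > 0" if t: "t < p" for t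
  proof -
    define i where "i = r ! t"
    define xs where "xs = take t r"
    have rn: "set r \<subseteq> {..<n}" using wn by (simp add: r_def)
    have i_n: "i < n" using rn t unfolding i_def p_def
      by (metis length_rev lessThan_iff nth_mem r_def subsetD)
    have xsn: "set xs \<subseteq> {..<n}" using rn unfolding xs_def by (meson set_take_subset subset_trans)
    have lenr: "length r = p" by (simp add: r_def p_def)
    have tk: "take (Suc t) r = xs @ [i]" unfolding xs_def i_def using t lenr by (simp add: take_Suc_conv_app_nth)
    define v where "v = i # rev xs"
    define w1 where "w1 = take (p - Suc t) w"
    have vdef: "v = drop (p - Suc t) w"
    proof -
      have "rev (take (Suc t) r) = drop (length w - Suc t) w" unfolding r_def by (simp add: rev_take)
      then show ?thesis using tk by (simp add: v_def p_def)
    qed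
    have wsplit: "w = w1 @ v" unfolding w1_def vdef by simp
    have lv: "length v = Suc t" using t lenr unfolding v_def xs_def by simp
    have vn: "set v \<subseteq> {..<n}" using wn wsplit by auto
    have vred: "cox_len n M v = length v"
    proof -
      have "cox_len n M (w1 @ v @ []) \<le> length w1 + cox_len n M v + length ([]::nat list)" by (rule len_infix)
      then have "length w \<le> length w1 + cox_len n M v" using wr wsplit by simp
      then show ?thesis using len_le[of n M v] wsplit by simp
    qed
    have lxsi: "cox_len n M (xs @ [i]) = Suc t"
    proof -
      have "xs @ [i] = rev v" by (simp add: v_def)
      then show ?thesis using len_rev[of n M v] vred lv by simp
    qed
    have lxs: "cox_len n M xs \<le> t" using len_le[of n M xs] t lenr by (simp add: xs_def)
    define b where "b = act n M xs (al i)"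
    have bnn: "b l \<ge> 0" for l unfolding b_def using posB[of xs i l] lxsi lxs xsn i_n by simp
    have vJ: "act n M v (al j) l \<ge> 0" if j: "j \<in> J" for j l
    proof -
      have jn: "j < n" using j assms(2) by auto
      have "cox_len n M (v @ [j]) > cox_len n M v"
      proof (rule ccontr)
        assume "\<not> ?thesis"
        then have lt: "cox_len n M (v @ [j]) < cox_len n M v" using len_parity[of n M v j] by simp
        have "cox_len n M (w1 @ (v @ [j]) @ []) \<le> length w1 + cox_len n M (v @ [j]) + length ([]::nat list)"
          by (rule len_infix)
        then have "cox_len n M (w @ [j]) < cox_len n M w" using lt vred wr wsplit by simp
        then show False using assms(5) j unfolding in_min_coset_def by auto
      qed
      then show ?thesis using posB vn jn by blast
    qed
    have actvb: "act n M v b i = -1"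
    proof -
      have "act n M v b = sr n M i (act n M (rev xs) (act n M xs (al i)))"
        by (simp add: v_def b_def)
      also have "\<dots> = sr n M i (al i)" using act_rev_inv[OF xsn] diag by simp
      finally have e: "act n M v b = sr n M i (al i)" .
      have "(\<Sum>l<n. M i l * al i l) = (\<Sum>l<n. if l = i then M i i else 0)"
        by (intro sum.cong) (auto simp: al_def)
      then have "(\<Sum>l<n. M i l * al i l) = 2" using i_n diag by simp
      then show ?thesis unfolding e sr_def by (simp add: al_def)
    qed
    have bsupp: "\<forall>l\<ge>n. b l = 0"
    proof (intro allI impI)
      fix l assume "n \<le> l"
      then show "b l = 0" unfolding b_def by (rule act_support[OF xsn, rotated]) (use i_n in \<open>auto simp: al_def\<close>)
    qed
    have ex: "\<exists>l<n. l \<notin> J \<and> b l > 0"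
    proof (rule ccontr)
      assume "\<not> ?thesis"
      then have z: "b l = 0" if "l < n" "l \<notin> J" for l using bnn[of l] that by force
      have "act n M v b = act n M v (\<lambda>k. \<Sum>l<n. b l * al l k)" using arg_cong[OF expand[OF bsupp], of "act n M v"] .
      also have "\<dots> = (\<lambda>k. \<Sum>l<n. b l * act n M v (al l) k)" by (rule act_sum) simp
      finally have "act n M v b i = (\<Sum>l<n. b l * act n M v (al l) i)" by simp
      moreover have "(\<Sum>l<n. b l * act n M v (al l) i) \<ge> 0"
      proof (rule sum_nonneg)
        fix l assume "l \<in> {..<n}"
        then show "b l * act n M v (al l) i \<ge> 0"
          using z[of l] bnn[of l] vJ[of l i] by (cases "l \<in> J") auto
      qed
      ultimately show False using actvb by simp
    qed
    then obtain l0 where l0: "l0 < n" "l0 \<notin> J" "b l0 > 0" by blast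
    have "(\<Sum>l<n. lam l * b l) > 0"
      by (rule sum_pos2[where i=l0]) (use l0 lamP lam0 bnn in auto)
    then show ?thesis using pos_pair[OF xsn i_n, of M lam] unfolding b_def xs_def i_def by simp
  qed
  show ?thesis
  proof (intro allI impI)
    fix q assume q: "1 \<le> q \<and> q \<le> length w"
    show "legal M lam (take q (rev w))"
    proof (rule legal_pos, intro allI impI)
      fix t assume "t < length (take q (rev w))"
      then have t: "t < q" "t < p" using q by (auto simp: p_def)
      have "take t (take q (rev w)) = take t r" "take q (rev w) ! t = r ! t"
        using t by (auto simp: r_def min_def)
      then show "foldl (fire M) lam (take t (take q (rev w))) (take q (rev w) ! t) > 0"
        using key[OF t(2)] by simp
    qed
  qed
qed


end
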